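(* Assume ${\rm ZFC}$. If the principle $(\lrcorner)$ holds, then $2^{\aleph_0}>\aleph_1$.
   Context: A map $m:[X]^{<\omega}\to[X]^{<\omega}$ (where $[X]^{<\omega}$ is the set of finite subsets of $X$) is called monotone if $a\subseteq m(a)$ for every finite $a\subseteq X$. The principle $(\lrcorner)$ is the statement: for every sequence $\langle f_\alpha:\alpha<\omega_1\rangle$ of functions from $\omega_1$ to $\omega_1$, every finite subset $F$ of $\omega_1$ and every monotone map $m:[\omega_1]^{<\omega}\to[\omega_1]^{<\omega}$, there exists a function $g:\omega_1\to\omega_1$ such that $F\cap\mathrm{ran}(g)=\emptyset$ and for every $a\in[\omega_1]^{<\omega}$ there exists $b\in[\omega_1]^{<\omega}$ with $a\subseteq b$ such that $\{\beta<\omega_1: f_\alpha(\beta)=g(\beta)\}\subseteq m(b)$ for all $\alpha\in m(b)$. *)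

theory Defs
  imports Main
begin

text \<open>A map m on finite subsets of X (represented as a total map on sets, only
its values on finite sets matter) is monotone if it sends finite sets to finite
supersets.\<close>
definition monotone_fin_map :: "('a set \<Rightarrow> 'a set) \<Rightarrow> bool" where
  "monotone_fin_map m \<longleftrightarrow> (\<forall>a. finite a \<longrightarrow> finite (m a) \<and> a \<subseteq> m a)"

text \<open>The principle (corner) for a type 'a playing the role of omega_1.\<close>
definition corner_principle :: "'a itself \<Rightarrow> bool" where
  "corner_principle _ \<longleftrightarrow>
     (\<forall>(f :: 'a \<Rightarrow> 'a \<Rightarrow> 'a) (F :: 'a set) (m :: 'a set \<Rightarrow> 'a set).
        finite F \<longrightarrow> monotone_fin_map m \<longrightarrow>
        (\<exists>g :: 'a \<Rightarrow> 'a. F \<inter> range g = {} \<and>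
           (\<forall>a. finite a \<longrightarrow>
              (\<exists>b. finite b \<and> a \<subseteq> b \<and>
                 (\<forall>\<alpha>\<in>m b. {\<beta>. f \<alpha> \<beta> = g \<beta>} \<subseteq> m b)))))"

end

theory Submission
  imports Defs "HOL-Library.Nat_Bijection"
begin

lemma no_bij:
  fixes phi :: "'a \<Rightarrow> nat set"
  assumes bij: "bij phi" and cp: "corner_principle TYPE('a)"
  shows False
proof -
  define psi where "psi = inv phi"
  have pp: "\<And>x. phi (psi x) = x" using bij unfolding psi_def by (simp add: bij_is_surj surj_f_inv_f)
  have pp2: "\<And>x. psi (phi x) = x" using bij unfolding psi_def by (simp add: bij_is_inj)
  define \<iota> :: "nat \<Rightarrow> 'a" where "\<iota> n = psi {n}" for n
  have inj\<iota>: "inj \<iota>" unfolding inj_def \<iota>_def by (metis pp singleton_inject)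
  define s :: "'a \<Rightarrow> nat \<Rightarrow> 'a" where
    "s x n = psi {k. prod_encode (n,k) \<in> phi x}" for x n
  define f :: "'a \<Rightarrow> 'a \<Rightarrow> 'a" where "f \<alpha> \<beta> = s \<alpha> (inv \<iota> \<beta>)" for \<alpha> \<beta>
  have mono: "monotone_fin_map (\<lambda>a. a)" unfolding monotone_fin_map_def by auto
  from cp[unfolded corner_principle_def, rule_format, of "{}" "\<lambda>a. a" f, OF _ mono]
  obtain g where g: "\<forall>a. finite a \<longrightarrow> (\<exists>b. finite b \<and> a \<subseteq> b \<and>
        (\<forall>\<alpha>\<in>b. {\<beta>. f \<alpha> \<beta> = g \<beta>} \<subseteq> b))" by auto
  define x where "x = psi {prod_encode (n,k) | n k. k \<in> phi (g (\<iota> n))}"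
  have sx: "s x n = g (\<iota> n)" for n
  proof -
    have "{k. prod_encode (n,k) \<in> phi x} = phi (g (\<iota> n))"
      unfolding x_def pp by (auto simp: prod_encode_eq)
    thus ?thesis unfolding s_def by (simp add: pp2)
  qed
  have "range \<iota> \<subseteq> {\<beta>. f x \<beta> = g \<beta>}"
    using sx inj\<iota> unfolding f_def by auto
  moreover obtain b where "finite b" "x \<in> b" "{\<beta>. f x \<beta> = g \<beta>} \<subseteq> b"
    using g[rule_format, of "{x}"] by auto
  ultimately have "finite (range \<iota>)" by (meson finite_subset subset_trans)
  thus False using inj\<iota> finite_imageD by blast
qed

theorem mainTheorem1:
  assumes "ordIso2 (card_of (UNIV :: 'a set)) (cardSuc natLeq)"
    and "corner_principle TYPE('a)"
  shows "ordLess2 (card_of (UNIV :: 'a set)) (card_of (UNIV :: nat set set))"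
proof -
  have "ordLess2 natLeq (card_of (UNIV :: nat set set))"
    using card_of_Pow[of "UNIV :: nat set"] card_of_nat
    by (metis Pow_UNIV ordIso_ordLess_trans ordIso_symmetric)
  hence "ordLeq2 (cardSuc natLeq) (card_of (UNIV :: nat set set))"
    using cardSuc_ordLess_ordLeq natLeq_Card_order card_of_Card_order by blast
  hence le: "ordLeq2 (card_of (UNIV :: 'a set)) (card_of (UNIV :: nat set set))"
    using assms(1) ordIso_ordLeq_trans by blast
  show ?thesis
  proof (rule ccontr)
    assume "\<not> ?thesis"
    hence "ordIso2 (card_of (UNIV :: 'a set)) (card_of (UNIV :: nat set set))"
      using le ordLeq_iff_ordLess_or_ordIso by blast
    then obtain phi :: "'a \<Rightarrow> nat set" where "bij_betw phi UNIV UNIV"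
      using card_of_ordIso by blast
    thus False using no_bij assms(2) by blast
  qed
qed

end
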